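(* Let $N$ be a positive integer and, for $t>-\log N$, let $\theta(t,N)=\lim_{n\to\infty}\Big(\int_N^n\frac{dx}{t+\log x}-\sum_{j=N}^{n-1}\frac{1}{H_j-\gamma+t}\Big)$. Then $t\mapsto\theta(t,N)$ is strictly totally monotone on $(-\log N,\infty)$, and for every nonnegative integer $k$ and every $t>-\log N$, $$(-1)^k\frac{d^k}{dt^k}\theta(t,N)=k!\lim_{n\to\infty}\Big(\int_N^n\frac{dx}{(t+\log x)^{k+1}}-\sum_{j=N}^{n-1}\frac{1}{(H_j-\gamma+t)^{k+1}}\Big)>0.$$
   Context: $\gamma$ is the Euler–Mascheroni constant and $H_j=\sum_{i=1}^j1/i$. A real function $f$ on an interval $I$ is strictly totally monotone on $I$ if it is continuous on $I$, infinitely differentiable on the interior of $I$, and $(-1)^kf^{(k)}(x)>0$ for all $x$ in the interior of $I$ and all integers $k\ge0$. *)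

theory Defs
  imports "HOL-Analysis.Analysis"
begin

definition strictly_totally_monotone :: "real set \<Rightarrow> (real \<Rightarrow> real) \<Rightarrow> bool" where
  "strictly_totally_monotone I f \<longleftrightarrow>
     continuous_on I f \<and>
     (\<forall>k::nat. \<forall>x\<in>interior I. ((deriv ^^ k) f) field_differentiable (at x)) \<and>
     (\<forall>k::nat. \<forall>x\<in>interior I. (-1) ^ k * (deriv ^^ k) f x > 0)"

definition theta :: "real \<Rightarrow> nat \<Rightarrow> real" where
  "theta t N = lim (\<lambda>n::nat. integral {real N..real n} (\<lambda>x. 1 / (t + ln x))
       - (\<Sum>j=N..<n. 1 / (harm j - euler_mascheroni + t)))"

end

theory Submission
  imports Defs "HOL-Real_Asymp.Real_Asymp"
begin

lemma ln_strict:
  fixes x y :: real assumes "0 < x" "x < y"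
  shows "ln y - ln x > 2 * (y - x) / (x + y)"
proof -
  define \<phi> where "\<phi> z = ln z - 2 * (z - x) / (x + z)" for z
  have "\<phi> x < \<phi> y"
  proof (rule DERIV_pos_imp_increasing_open[OF assms(2)])
    fix z assume z: "x < z" "z < y"
    have "(\<phi> has_real_derivative (1/z - 4*x/(x+z)^2)) (at z)"
      unfolding \<phi>_def using z assms
      by (auto intro!: derivative_eq_intros simp: field_simps power2_eq_square)
    moreover have "1/z - 4*x/(x+z)^2 = (z-x)^2/(z*(x+z)^2)"
      using z assms by (simp add: divide_simps power2_eq_square) (simp add: algebra_simps)
    moreover have "(z-x)^2/(z*(x+z)^2) > 0" using z assms by auto
    ultimately show "\<exists>y. (\<phi> has_real_derivative y) (at z) \<and> 0 < y" by auto
  next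
    show "continuous_on {x..y} \<phi>" unfolding \<phi>_def using assms
      by (intro continuous_intros) auto
  qed
  thus ?thesis by (simp add: \<phi>_def)
qed

lemma harm_gamma_lower:
  assumes "j \<ge> 1"
  shows "ln (real j + 1/2) < harm j - (euler_mascheroni::real)"
proof -
  define D where "D n = harm n - ln (real n + 1/2)" for n
  have step: "D (Suc n) < D n" for n
  proof -
    have "ln (real n + 3/2) - ln (real n + 1/2) > 2 * 1 / (2 * real n + 2)"
      using ln_strict[of "real n + 1/2" "real n + 3/2"] by (simp add: field_simps)
    thus ?thesis by (simp add: D_def harm_Suc field_simps)
  qed
  have dec: "decseq D" using step by (intro decseq_SucI) (simp add: less_imp_le)
  have "(\<lambda>n. (harm n - ln (real n)) + (ln (real n) - ln (real n + 1/2))) \<longlonglongrightarrow> euler_mascheroni + 0"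
    by (intro tendsto_add euler_mascheroni_LIMSEQ) real_asymp
  moreover have "eventually (\<lambda>n. (harm n - ln (real n)) + (ln (real n) - ln (real n + 1/2)) = D n) sequentially"
    by (auto simp: D_def)
  ultimately have "D \<longlonglongrightarrow> euler_mascheroni" by (simp add: tendsto_cong)
  hence "euler_mascheroni \<le> D (Suc j)" using dec decseq_ge by blast
  also have "\<dots> < D j" by (rule step)
  finally show ?thesis by (simp add: D_def)
qed

lemma harm_gamma_upper:
  assumes "j \<ge> 1"
  shows "harm j - (euler_mascheroni::real) \<le> ln (real j + 1)"
proof -
  obtain n where n: "j = Suc n" using assms by (cases j) auto
  have "euler_mascheroni \<ge> harm (Suc n) - ln (real_of_nat (n + 2)) + 1/real_of_nat (2 * (n + 2))"
    by (rule euler_mascheroni_lower)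
  moreover have "1/real_of_nat (2 * (n + 2)) \<ge> 0" by simp
  ultimately have "harm (Suc n) - euler_mascheroni \<le> ln (real_of_nat (n+2))" by linarith
  thus ?thesis using n by (simp add: add_ac)
qed



lemma G_deriv:
  fixes t x :: real assumes "x > 0" "t + ln x > 0"
  shows "((\<lambda>x. 1/(t+ln x)^(k+1)) has_real_derivative (-(real k+1)/(x*(t+ln x)^(k+2)))) (at x)"
proof -
  define u where "u = t + ln x"
  have u: "u > 0" using assms u_def by simp
  have d0: "((\<lambda>x. t+ln x) has_real_derivative (1/x)) (at x)"
    using assms by (auto intro!: derivative_eq_intros)
  have d1: "((\<lambda>x. (t+ln x)^(k+1)) has_real_derivative (real (k+1) * u^k * (1/x))) (at x)"
    using DERIV_power[OF d0, of "k+1"] unfolding u_def by (simp add: mult_ac)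
  have nz: "(t + ln x)^(k+1) \<noteq> 0" using u u_def by simp
  have d2: "((\<lambda>x. inverse ((t+ln x)^(k+1))) has_real_derivative (- ((real (k+1) * u^k * (1/x)) * inverse (((t + ln x)^(k+1)) ^ Suc (Suc 0))))) (at x)"
    by (rule DERIV_inverse_fun[OF d1 nz])
  have feq: "(\<lambda>x. inverse ((t+ln x)^(k+1))) = (\<lambda>x. 1/(t+ln x)^(k+1))"
    by (simp add: inverse_eq_divide)
  have veq: "- ((real (k+1) * u^k * (1/x)) * inverse (((t + ln x)^(k+1)) ^ Suc (Suc 0))) = -(real k+1)/(x*(t+ln x)^(k+2))"
  proof -
    have "((t + ln x)^(k+1)) ^ Suc (Suc 0) = u^k * u^(k+2)" unfolding u_def
      by (simp add: power_add[symmetric] power_mult[symmetric] algebra_simps)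
    thus ?thesis using u assms unfolding u_def[symmetric] by (simp add: field_simps)
  qed
  show ?thesis using d2 unfolding feq veq .
qed

lemma G_cont:
  fixes t a b :: real assumes "a > 0" "t + ln a > 0"
  shows "continuous_on {a..b} (\<lambda>x. 1/(t+ln x)^(k+1))"
proof -
  have "\<forall>x\<in>{a..b}. x > 0 \<and> t + ln x > 0"
    using assms by (auto intro: order.strict_trans2) 
  thus ?thesis
    by (intro continuous_intros) auto
qed

lemma G'_mono:
  fixes t x y :: real assumes "x > 0" "t + ln x > 0" "x \<le> y"
  shows "-(real k+1)/(x*(t+ln x)^(k+2)) \<le> -(real k+1)/(y*(t+ln y)^(k+2))"
proof -
  have y: "y > 0" "t + ln y \<ge> t + ln x" using assms by auto
  have "(t+ln x)^(k+2) \<le> (t+ln y)^(k+2)" using assms y by (intro power_mono) auto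
  hence "x*(t+ln x)^(k+2) \<le> y*(t+ln y)^(k+2)" using assms y by (intro mult_mono) auto
  moreover have "x*(t+ln x)^(k+2) > 0" using assms by auto
  ultimately have "(real k+1)/(y*(t+ln y)^(k+2)) \<le> (real k+1)/(x*(t+ln x)^(k+2))"
    by (intro divide_left_mono) auto
  thus ?thesis by (simp only: minus_divide_left[symmetric] neg_le_iff_le)
qed

lemma in_A: fixes t x :: real shows "x \<in> {exp (-t)<..} \<longleftrightarrow> x > 0 \<and> t + ln x > 0"
proof
  assume "x \<in> {exp (-t)<..}"
  hence x: "x > exp (-t)" by simp
  hence "x > 0" using exp_gt_zero[of "-t"] by linarith
  moreover have "ln x > -t" using x \<open>x > 0\<close> by (metis ln_exp ln_less_cancel_iff exp_gt_zero)
  ultimately show "x > 0 \<and> t + ln x > 0" by simp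
next
  assume "x > 0 \<and> t + ln x > 0"
  thus "x \<in> {exp (-t)<..}" by (metis add.commute diff_gt_0_iff_gt exp_less_cancel_iff exp_ln greaterThan_iff diff_minus_eq_add minus_diff_eq)
qed

lemma int_lower:
  fixes j t :: real assumes "j \<ge> 1" "t + ln j > 0"
  shows "integral {j..j+1} (\<lambda>x. 1/(t+ln x)^(k+1)) \<ge> 1/(t + ln (j+1/2))^(k+1)"
proof -
  define A where "A = {exp (-t)<..}"
  define G where "G x = 1/(t+ln x)^(k+1)" for x
  define G' where "G' x = -(real k+1)/(x*(t+ln x)^(k+2))" for x
  have inA: "x \<in> A \<longleftrightarrow> x > 0 \<and> t + ln x > 0" for x unfolding A_def by (rule in_A)
  have GD: "x \<in> A \<Longrightarrow> (G has_real_derivative G' x) (at x)" for x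
    unfolding G_def G'_def inA by (intro G_deriv) auto
  have conv: "convex_on A G"
  proof (rule convex_on_realI[where f'=G'])
    show "connected A" unfolding A_def by simp
    show "x \<in> A \<Longrightarrow> (G has_real_derivative G' x) (at x)" for x by (rule GD)
    show "x \<in> A \<Longrightarrow> y \<in> A \<Longrightarrow> x \<le> y \<Longrightarrow> G' x \<le> G' y" for x y
      unfolding G'_def inA by (intro G'_mono) auto
  qed
  define m where "m = j + 1/2"
  have jA: "j \<in> A" using assms inA by auto
  have sub: "{j..j+1} \<subseteq> A"
  proof
    fix x assume "x \<in> {j..j+1}"
    hence "x \<ge> j" by simp
    thus "x \<in> A" using jA unfolding inA by (smt (verit) ln_le_cancel_iff)
  qed
  have mA: "m \<in> A" using sub m_def by auto
  have tang: "G x - G m \<ge> G' m * (x - m)" if "x \<in> {j..j+1}" for x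
  proof (rule convex_on_imp_above_tangent[OF conv])
    show "connected A" unfolding A_def by simp
    show "m \<in> interior A" using mA unfolding A_def by (simp add: interior_open)
    show "x \<in> A" using that sub by auto
    show "(G has_real_derivative G' m) (at m within A)" using GD[OF mA] by (rule has_field_derivative_at_within)
  qed
  have lin: "((\<lambda>x. G m + G' m * (x - m)) has_integral G m) {j..j+1}"
  proof -
    have "((\<lambda>x. G m + G' m * (x - m)) has_integral
           ((G m * (j+1) + G' m * ((j+1) - m)^2/2) - (G m * j + G' m * (j - m)^2/2))) {j..j+1}"
      by (rule fundamental_theorem_of_calculus)
         (auto intro!: derivative_eq_intros simp: has_real_derivative_iff_has_vector_derivative[symmetric] power2_eq_square field_simps)
    moreover have "(G m * (j+1) + G' m * ((j+1) - m)^2/2) - (G m * j + G' m * (j - m)^2/2) = G m"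
      by (simp add: m_def power2_eq_square algebra_simps)
    ultimately show ?thesis by simp
  qed
  have Gint: "(G has_integral integral {j..j+1} G) {j..j+1}"
  proof (rule integrable_integral, rule integrable_continuous_real)
    show "continuous_on {j..j+1} G" unfolding G_def using assms by (intro G_cont) auto
  qed
  have "G m \<le> integral {j..j+1} G"
  proof (rule has_integral_le[OF lin Gint])
    fix x assume "x \<in> {j..j+1}"
    from tang[OF this] show "G m + G' m * (x - m) \<le> G x" by linarith
  qed
  thus ?thesis unfolding G_def[abs_def] m_def .
qed

lemma inv_pow_chain:
  fixes f :: "real \<Rightarrow> real"
  assumes d0: "(f has_real_derivative f') (at x)" and pos: "f x > 0"
  shows "((\<lambda>x. 1/(f x)^(k+1)) has_real_derivative (-(real k+1) * f' /(f x)^(k+2))) (at x)"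
proof -
  define u where "u = f x"
  have u: "u > 0" using pos u_def by simp
  have d1: "((\<lambda>x. (f x)^(k+1)) has_real_derivative (real (k+1) * f' * u^k)) (at x)"
    using DERIV_power[OF d0, of "k+1"] unfolding u_def by (simp add: mult.assoc)
  have nz: "(f x)^(k+1) \<noteq> 0" using u u_def by simp
  have d2: "((\<lambda>x. inverse ((f x)^(k+1))) has_real_derivative (- ((real (k+1) * f' * u^k) * inverse (((f x)^(k+1)) ^ Suc (Suc 0))))) (at x)"
    by (rule DERIV_inverse_fun[OF d1 nz])
  have feq: "(\<lambda>x. inverse ((f x)^(k+1))) = (\<lambda>x. 1/(f x)^(k+1))"
    by (simp add: inverse_eq_divide)
  have veq: "- ((real (k+1) * f' * u^k) * inverse (((f x)^(k+1)) ^ Suc (Suc 0))) = -(real k+1) * f'/(f x)^(k+2)"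
  proof -
    have "((f x)^(k+1)) ^ Suc (Suc 0) = u^k * u^(k+2)" unfolding u_def
      by (simp add: power_add[symmetric] power_mult[symmetric] algebra_simps)
    thus ?thesis using u unfolding u_def[symmetric] by (simp add: field_simps)
  qed
  show ?thesis using d2 unfolding feq veq .
qed

lemma int_upper:
  fixes j t :: real assumes "j \<ge> 1" "t + ln j > 0"
  shows "integral {j..j+1} (\<lambda>x. 1/(t+ln x)^(k+1)) \<le> 1/(t + ln j)^(k+1)"
proof -
  have "integral {j..j+1} (\<lambda>x. 1/(t+ln x)^(k+1)) \<le> integral {j..j+1} (\<lambda>x. 1/(t+ln j)^(k+1))"
  proof (rule integral_le)
    show "(\<lambda>x. 1/(t+ln x)^(k+1)) integrable_on {j..j+1}"
      using assms by (intro integrable_continuous_real G_cont) auto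
    show "(\<lambda>x. 1/(t+ln j)^(k+1)) integrable_on {j..j+1}" by (intro integrable_continuous_real continuous_intros)
    fix x assume "x \<in> {j..j+1}"
    hence "t + ln j \<le> t + ln x" using assms by auto
    thus "1/(t+ln x)^(k+1) \<le> 1/(t+ln j)^(k+1)" using assms
      by (intro divide_left_mono power_mono mult_pos_pos) auto
  qed
  thus ?thesis by simp
qed

definition aT :: "nat \<Rightarrow> real \<Rightarrow> nat \<Rightarrow> real" where
  "aT k t j = integral {real j..real j + 1} (\<lambda>x. 1/(t+ln x)^(k+1)) - 1/(harm j - euler_mascheroni + t)^(k+1)"

definition BT :: "nat \<Rightarrow> real \<Rightarrow> nat \<Rightarrow> real" where
  "BT k t j = 1/(t+ln (real j))^(k+1) - 1/(t+ln (real j + 1))^(k+1)"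

lemma recip_pow_mono:
  fixes a b :: real assumes "0 < a" "a \<le> b"
  shows "1/b^(k+1) \<le> 1/a^(k+1)"
proof -
  have "a^(k+1) \<le> b^(k+1)" using assms by (intro power_mono) auto
  moreover have "0 < a^(k+1)" using assms by simp
  ultimately show ?thesis by (intro divide_left_mono) auto
qed

lemma recip_pow_strict:
  fixes a b :: real assumes "0 < a" "a < b"
  shows "1/b^(k+1) < 1/a^(k+1)"
proof -
  have "a^(k+1) < b^(k+1)" using assms by (intro power_strict_mono) auto
  moreover have "0 < a^(k+1)" using assms by simp
  ultimately show ?thesis by (intro divide_strict_left_mono) auto
qed

lemma aT_bounds:
  assumes "j \<ge> 1" "t + ln (real j) > 0"
  shows "0 < aT k t j \<and> aT k t j \<le> BT k t j"
proof -
  define c where "c = harm j - (euler_mascheroni::real)"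
  have c1: "ln (real j + 1/2) < c" unfolding c_def using assms(1) by (rule harm_gamma_lower)
  have c2: "c \<le> ln (real j + 1)" unfolding c_def using assms(1) by (rule harm_gamma_upper)
  have "ln (real j) \<le> ln (real j + 1/2)" using assms(1) by simp
  hence p1: "t + ln (real j + 1/2) > 0" using assms(2) by linarith
  have "1/(c+t)^(k+1) < 1/(t + ln (real j + 1/2))^(k+1)"
    using c1 p1 by (intro recip_pow_strict) auto
  also have "\<dots> \<le> integral {real j..real j + 1} (\<lambda>x. 1/(t+ln x)^(k+1))"
    using assms by (intro int_lower) auto
  finally have lo: "0 < aT k t j" by (simp add: aT_def c_def)
  have "integral {real j..real j + 1} (\<lambda>x. 1/(t+ln x)^(k+1)) \<le> 1/(t + ln (real j))^(k+1)"
    using assms by (intro int_upper) auto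
  moreover have "1/(t+ln (real j + 1))^(k+1) \<le> 1/(c+t)^(k+1)"
    using c1 c2 p1 by (intro recip_pow_mono) auto
  ultimately have "aT k t j \<le> BT k t j" by (simp add: aT_def BT_def c_def)
  with lo show ?thesis by simp
qed

lemma BT_mono:
  assumes "j \<ge> 1" "t0 + ln (real j) > 0" "t0 \<le> t"
  shows "BT k t j \<le> BT k t0 j"
proof (rule DERIV_nonpos_imp_nonincreasing[OF assms(3), of "\<lambda>s. BT k s j"])
  fix s assume s: "t0 \<le> s" "s \<le> t"
  define p where "p = ln (real j)"
  define q where "q = ln (real j + 1)"
  have pq: "p \<le> q" "s + p > 0" using assms s by (auto simp: p_def q_def)
  have d1: "((\<lambda>s. 1/(s+p)^(k+1)) has_real_derivative (-(real k+1) * 1 /(s+p)^(k+2))) (at s)"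
    by (rule inv_pow_chain) (use pq in \<open>auto intro!: derivative_eq_intros\<close>)
  have d2: "((\<lambda>s. 1/(s+q)^(k+1)) has_real_derivative (-(real k+1) * 1 /(s+q)^(k+2))) (at s)"
    by (rule inv_pow_chain) (use pq in \<open>auto intro!: derivative_eq_intros\<close>)
  have "((\<lambda>s. BT k s j) has_real_derivative ((-(real k+1) * 1 /(s+p)^(k+2)) - (-(real k+1) * 1 /(s+q)^(k+2)))) (at s)"
    unfolding BT_def p_def[symmetric] q_def[symmetric] by (rule DERIV_diff[OF d1 d2])
  moreover have "(real k+1) /(s+q)^(k+2) \<le> (real k+1) /(s+p)^(k+2)"
    using recip_pow_mono[of "s+p" "s+q" "k+1"] pq by (simp add: divide_inverse)
  hence "(-(real k+1) * 1 /(s+p)^(k+2)) - (-(real k+1) * 1 /(s+q)^(k+2)) \<le> 0"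
    by (simp only: mult_1_right minus_divide_left[symmetric])
  ultimately show "\<exists>y. ((\<lambda>s. BT k s j) has_real_derivative y) (at s) \<and> y \<le> 0" by blast
qed




lemma aT_deriv:
  assumes "j \<ge> 1" "t + ln (real j) > 0"
  shows "((\<lambda>s. aT k s j) has_real_derivative (-(real k+1) * aT (k+1) t j)) (at t)"
proof -
  define U where "U = {- ln (real j)<..}"
  have tU: "t \<in> U" using assms U_def by auto
  have oU: "open U" "convex U" unfolding U_def by auto
  have posU: "s + ln x > 0" if "s \<in> U" "x \<in> cbox (real j) (real j + 1)" for s x
  proof -
    have "ln (real j) \<le> ln x" using that assms by auto
    thus ?thesis using that U_def by auto
  qed
  have I: "((\<lambda>s. integral (cbox (real j) (real j + 1)) (\<lambda>x. 1/(s+ln x)^(k+1)))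
      has_field_derivative integral (cbox (real j) (real j + 1)) (\<lambda>x. -(real k+1) * 1/(t+ln x)^(k+2))) (at t within U)"
  proof (rule leibniz_rule_field_derivative[where fx = "\<lambda>s x. -(real k+1) * 1/(s+ln x)^(k+2)"])
    fix s x assume sx: "s \<in> U" "x \<in> cbox (real j) (real j + 1)"
    have "((\<lambda>s. 1/(s+ln x)^(k+1)) has_real_derivative (-(real k+1) * 1/(s+ln x)^(k+2))) (at s)"
      by (rule inv_pow_chain) (use posU[OF sx] in \<open>auto intro!: derivative_eq_intros\<close>)
    thus "((\<lambda>s. 1/(s+ln x)^(k+1)) has_real_derivative (-(real k+1) * 1/(s+ln x)^(k+2))) (at s within U)"
      by (rule has_field_derivative_at_within)
  next
    fix s assume s: "s \<in> U"
    show "(\<lambda>x. 1/(s+ln x)^(k+1)) integrable_on cbox (real j) (real j + 1)"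
      unfolding cbox_interval using posU[OF s, of "real j"] assms
      by (intro integrable_continuous_real G_cont) auto
  next
    show "continuous_on (U \<times> cbox (real j) (real j + 1)) (\<lambda>(s, x). -(real k+1) * 1/(s+ln x)^(k+2))"
    proof -
      have h: "\<forall>z\<in>U \<times> cbox (real j) (real j + 1). snd z > 0 \<and> fst z + ln (snd z) > 0"
        using posU assms by (auto simp: cbox_interval)
      have h2: "\<forall>z\<in>U \<times> cbox (real j) (real j + 1). (fst z + ln (snd z))^(k+2) \<noteq> 0"
      proof
        fix z assume "z \<in> U \<times> cbox (real j) (real j + 1)"
        with h have "fst z + ln (snd z) > 0" by blast
        thus "(fst z + ln (snd z))^(k+2) \<noteq> 0" by simp
      qed
      have "continuous_on (U \<times> cbox (real j) (real j + 1)) (\<lambda>z. -(real k+1) * 1/(fst z+ln (snd z))^(k+2))"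
        by (intro continuous_intros) (use h h2 in \<open>fastforce\<close>)+
      thus ?thesis by (simp add: split_beta)
    qed
  qed (use tU oU in auto)
  hence I': "((\<lambda>s. integral {real j..real j + 1} (\<lambda>x. 1/(s+ln x)^(k+1)))
      has_field_derivative -(real k+1) * integral {real j..real j + 1} (\<lambda>x. 1/(t+ln x)^(k+2))) (at t)"
  proof -
    have e1: "(\<lambda>x. -(real k+1) * 1/(t+ln x)^(k+2)) = (\<lambda>x. (-(real k+1)) *\<^sub>R (1/(t+ln x)^(k+2)))"
      by (simp add: field_simps)
    have e2: "at t within U = at t" by (rule at_within_open[OF tU oU(1)])
    note I2 = I[unfolded e1 e2 integral_cmul cbox_interval]
    show ?thesis using I2 unfolding real_scaleR_def .
  qed
  define c where "c = harm j - (euler_mascheroni::real)"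
  have c1: "ln (real j + 1/2) < c" unfolding c_def using assms(1) by (rule harm_gamma_lower)
  have "ln (real j) \<le> ln (real j + 1/2)" using assms(1) by simp
  hence ct: "c + t > 0" using c1 assms(2) by linarith
  have S: "((\<lambda>s. 1/(c+s)^(k+1)) has_real_derivative (-(real k+1) * 1/(c+t)^(k+2))) (at t)"
    by (rule inv_pow_chain) (use ct in \<open>auto intro!: derivative_eq_intros\<close>)
  have "((\<lambda>s. aT k s j) has_real_derivative
      (-(real k+1) * integral {real j..real j + 1} (\<lambda>x. 1/(t+ln x)^(k+2)) - (-(real k+1) * 1/(c+t)^(k+2)))) (at t)"
    unfolding aT_def c_def[symmetric] by (rule DERIV_diff[OF I' S])
  moreover have "-(real k+1) * integral {real j..real j + 1} (\<lambda>x. 1/(t+ln x)^(k+2)) - (-(real k+1) * 1/(c+t)^(k+2))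
     = -(real k+1) * aT (k+1) t j"
    by (simp add: aT_def c_def algebra_simps)
  ultimately show ?thesis by simp
qed




lemma h_lim: "(\<lambda>i. 1/(t + ln (real (N+i)))^(k+1)) \<longlonglongrightarrow> 0"
proof -
  have "filterlim (\<lambda>i. t + ln (real (N+i))) at_top sequentially"
    by real_asymp
  hence "filterlim (\<lambda>i. (t + ln (real (N+i)))^(k+1)) at_top sequentially"
    by (intro filterlim_pow_at_top) auto
  from tendsto_inverse_0_at_top[OF this] show ?thesis by (simp add: inverse_eq_divide)
qed

lemma pos_ln:
  assumes "t + ln (real N) > 0" "N \<ge> 1"
  shows "t + ln (real (N+i)) > 0"
proof -
  have "ln (real N) \<le> ln (real (N+i))" using assms by simp
  thus ?thesis using assms by linarith
qed

lemma BT_summable: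
  assumes "t + ln (real N) > 0" "N \<ge> 1"
  shows "summable (\<lambda>i. BT k t (N+i))"
proof -
  define h where "h i = 1/(t + ln (real (N+i)))^(k+1)" for i
  have "(\<lambda>i. h i - h (Suc i)) sums (h 0 - 0)"
    by (rule telescope_sums') (unfold h_def, rule h_lim)
  moreover have "(\<lambda>i. h i - h (Suc i)) = (\<lambda>i. BT k t (N+i))"
    by (auto simp: h_def BT_def add_ac)
  ultimately show ?thesis by (auto simp: sums_iff)
qed

lemma aT_summable:
  assumes "t + ln (real N) > 0" "N \<ge> 1"
  shows "summable (\<lambda>i. aT k t (N+i))"
proof (rule summable_comparison_test'[OF BT_summable[OF assms, of k]])
  fix i :: nat
  have "0 < aT k t (N+i) \<and> aT k t (N+i) \<le> BT k t (N+i)"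
    using pos_ln[OF assms] assms by (intro aT_bounds) auto
  thus "norm (aT k t (N+i)) \<le> BT k t (N+i)" by simp
qed

definition FF :: "nat \<Rightarrow> nat \<Rightarrow> real \<Rightarrow> real" where
  "FF N k t = (\<Sum>i. aT k t (N+i))"

lemma FF_pos:
  assumes "t + ln (real N) > 0" "N \<ge> 1"
  shows "FF N k t > 0"
  unfolding FF_def
proof (rule suminf_pos[OF aT_summable[OF assms]])
  fix i show "0 < aT k t (N+i)"
    using pos_ln[OF assms] assms aT_bounds[of "N+i" t k] by auto
qed

lemma seq_eq:
  assumes "t + ln (real N) > 0" "N \<ge> 1"
  shows "integral {real N..real (i+N)} (\<lambda>x. 1/(t+ln x)^(k+1)) - (\<Sum>j=N..<i+N. 1/(harm j - euler_mascheroni + t)^(k+1))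
     = (\<Sum>i'<i. aT k t (N+i'))"
proof (induction i)
  case 0
  then show ?case by simp
next
  case (Suc i)
  have int: "(\<lambda>x. 1/(t+ln x)^(k+1)) integrable_on {real N..real (Suc i+N)}"
    using assms by (intro integrable_continuous_real G_cont) auto
  have comb: "integral {real N..real (i+N)} (\<lambda>x. 1/(t+ln x)^(k+1)) + integral {real (i+N)..real (Suc i+N)} (\<lambda>x. 1/(t+ln x)^(k+1))
     = integral {real N..real (Suc i+N)} (\<lambda>x. 1/(t+ln x)^(k+1))"
    by (rule Henstock_Kurzweil_Integration.integral_combine[OF _ _ int]) auto
  have sm: "(\<Sum>j=N..<Suc i+N. 1/(harm j - euler_mascheroni + t)^(k+1)) =
      (\<Sum>j=N..<i+N. 1/(harm j - euler_mascheroni + t)^(k+1)) + 1/(harm (i+N) - euler_mascheroni + t)^(k+1)"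
    by simp
  have "aT k t (N+i) = integral {real (i+N)..real (Suc i+N)} (\<lambda>x. 1/(t+ln x)^(k+1)) - 1/(harm (i+N) - euler_mascheroni + t)^(k+1)"
    by (simp add: aT_def add_ac)
  thus ?case using Suc.IH comb sm by simp
qed

lemma seq_lim:
  assumes "t + ln (real N) > 0" "N \<ge> 1"
  shows "(\<lambda>n. integral {real N..real n} (\<lambda>x. 1/(t+ln x)^(k+1)) - (\<Sum>j=N..<n. 1/(harm j - euler_mascheroni + t)^(k+1)))
     \<longlonglongrightarrow> FF N k t"
proof (rule LIMSEQ_offset[where k = N])
  have "(\<lambda>i. \<Sum>i'<i. aT k t (N+i')) \<longlonglongrightarrow> FF N k t"
    unfolding FF_def by (rule summable_LIMSEQ[OF aT_summable[OF assms]])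
  thus "(\<lambda>i. integral {real N..real (i+N)} (\<lambda>x. 1/(t+ln x)^(k+1)) - (\<Sum>j=N..<i+N. 1/(harm j - euler_mascheroni + t)^(k+1)))
     \<longlonglongrightarrow> FF N k t" by (simp only: seq_eq[OF assms])
qed




lemma FF_deriv:
  assumes "t + ln (real N) > 0" "N \<ge> 1"
  shows "((\<lambda>s. FF N k s) has_real_derivative (-(real k+1) * FF N (k+1) t)) (at t)"
proof -
  define t0 where "t0 = (t - ln (real N)) / 2"
  have t0: "t0 + ln (real N) > 0" "t0 < t" using assms by (auto simp: t0_def field_simps)
  define S where "S = {t0..}"
  have posS: "s + ln (real (N+i)) > 0" if "s \<in> S" for s i
    using pos_ln[of t0 N i] t0 assms that by (auto simp: S_def)
  have sumM: "summable (\<lambda>i. (real k+1) * BT (k+1) t0 (N+i))"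
    by (intro summable_mult BT_summable t0 assms)
  have cS: "convex S" by (simp add: S_def)
  have dS: "((\<lambda>s. aT k s (N+i)) has_field_derivative (-(real k+1) * aT (k+1) s (N+i))) (at s within S)"
      if "s \<in> S" for i s
  proof -
    have "t0 \<le> s" using that by (simp add: S_def)
    have "((\<lambda>s. aT k s (N+i)) has_real_derivative (-(real k+1) * aT (k+1) s (N+i))) (at s)"
      by (rule aT_deriv) (use posS[OF that, of i] assms in auto)
    thus ?thesis by (rule has_field_derivative_at_within)
  qed
  have uS: "uniformly_convergent_on S (\<lambda>n s. \<Sum>i<n. -(real k+1) * aT (k+1) s (N+i))"
  proof (rule Weierstrass_m_test'_ev[OF _ sumM])
    show "\<forall>\<^sub>F i in sequentially. \<forall>s\<in>S. norm (-(real k+1) * aT (k+1) s (N+i)) \<le> (real k+1) * BT (k+1) t0 (N+i)"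
    proof (intro always_eventually allI ballI)
      fix i s assume s: "s \<in> S"
      have b: "0 < aT (k+1) s (N+i) \<and> aT (k+1) s (N+i) \<le> BT (k+1) s (N+i)"
        by (rule aT_bounds) (use posS[OF s, of i] assms in auto)
      have "BT (k+1) s (N+i) \<le> BT (k+1) t0 (N+i)"
        by (rule BT_mono) (use pos_ln[of t0 N i] t0 assms s in \<open>auto simp: S_def\<close>)
      with b have "aT (k+1) s (N+i) \<le> BT (k+1) t0 (N+i)" by linarith
      thus "norm (-(real k+1) * aT (k+1) s (N+i)) \<le> (real k+1) * BT (k+1) t0 (N+i)"
        using b by (simp add: abs_mult add.commute mult_left_mono)
    qed
  qed
  have tS: "t \<in> S" using t0 by (simp add: S_def)
  have tI: "t \<in> interior S" using t0 by (simp add: S_def)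
  note main = has_field_derivative_series'[OF cS dS uS tS aT_summable[OF assms] tI]
  have "(\<Sum>i. -(real k+1) * aT (k+1) t (N+i)) = -(real k+1) * FF N (k+1) t"
    unfolding FF_def by (rule suminf_mult[OF aT_summable[OF assms]])
  with main(2) show ?thesis unfolding FF_def[abs_def] by simp
qed




theorem proposition3p8:
  fixes N :: nat
  assumes "N \<ge> 1"
  shows "strictly_totally_monotone {- ln (real N)<..} (\<lambda>t. theta t N) \<and>
    (\<forall>(k::nat) (t::real). t > - ln (real N) \<longrightarrow>
       convergent (\<lambda>n::nat. integral {real N..real n} (\<lambda>x. 1 / (t + ln x) ^ (k + 1))
          - (\<Sum>j=N..<n. 1 / (harm j - euler_mascheroni + t) ^ (k + 1))) \<and>
       (-1) ^ k * (deriv ^^ k) (\<lambda>t. theta t N) t =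
         fact k * lim (\<lambda>n::nat. integral {real N..real n} (\<lambda>x. 1 / (t + ln x) ^ (k + 1))
          - (\<Sum>j=N..<n. 1 / (harm j - euler_mascheroni + t) ^ (k + 1))) \<and>
       fact k * lim (\<lambda>n::nat. integral {real N..real n} (\<lambda>x. 1 / (t + ln x) ^ (k + 1))
          - (\<Sum>j=N..<n. 1 / (harm j - euler_mascheroni + t) ^ (k + 1))) > 0)"
proof -
  define U where "U = {- ln (real N)<..}"
  have inU: "t \<in> U \<longleftrightarrow> t + ln (real N) > 0" for t by (auto simp: U_def)
  have oU: "open U" by (simp add: U_def)
  define \<Theta> where "\<Theta> = (\<lambda>t. theta t N)"
  have lims: "lim (\<lambda>n::nat. integral {real N..real n} (\<lambda>x. 1 / (t + ln x) ^ (k + 1))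
          - (\<Sum>j=N..<n. 1 / (harm j - euler_mascheroni + t) ^ (k + 1))) = FF N k t"
    if "t \<in> U" for t k
    using seq_lim[of t N k] that assms inU by (intro limI) auto
  have th0: "\<Theta> t = FF N 0 t" if "t \<in> U" for t
    using lims[OF that, of 0] by (simp add: \<Theta>_def theta_def)
  have Q: "\<forall>t\<in>U. (deriv ^^ k) \<Theta> t = (-1)^k * fact k * FF N k t" for k
  proof (induction k)
    case 0
    then show ?case using th0 by simp
  next
    case (Suc k)
    show ?case
    proof
      fix t assume t: "t \<in> U"
      have d: "((\<lambda>s. (-1)^k * fact k * FF N k s) has_real_derivative
          ((-1)^k * fact k * (-(real k+1) * FF N (k+1) t))) (at t)"
        using FF_deriv[of t N k] t inU assms by (intro DERIV_cmult) auto
      have "((deriv ^^ k) \<Theta> has_real_derivative ((-1)^k * fact k * (-(real k+1) * FF N (k+1) t))) (at t)"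
        by (rule has_field_derivative_transform_within_open[OF d oU t]) (use Suc.IH in auto)
      hence "deriv ((deriv ^^ k) \<Theta>) t = (-1)^k * fact k * (-(real k+1) * FF N (k+1) t)"
        by (rule DERIV_imp_deriv)
      thus "(deriv ^^ Suc k) \<Theta> t = (-1)^Suc k * fact (Suc k) * FF N (Suc k) t"
        by (simp add: algebra_simps)
    qed
  qed
  have Dk: "((deriv ^^ k) \<Theta> has_real_derivative ((-1)^k * fact k * (-(real k+1) * FF N (k+1) t))) (at t)"
    if t: "t \<in> U" for k t
  proof -
    have d: "((\<lambda>s. (-1)^k * fact k * FF N k s) has_real_derivative
        ((-1)^k * fact k * (-(real k+1) * FF N (k+1) t))) (at t)"
      using FF_deriv[of t N k] t inU assms by (intro DERIV_cmult) auto
    show ?thesis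
      by (rule has_field_derivative_transform_within_open[OF d oU t]) (use Q in auto)
  qed
  have sgn: "(-1::real)^k * (-1)^k = 1" for k by (simp add: power_mult_distrib[symmetric])
  have pos: "(-1)^k * (deriv ^^ k) \<Theta> t = fact k * FF N k t" if "t \<in> U" for k t
  proof -
    have "(-1)^k * (deriv ^^ k) \<Theta> t = ((-1::real)^k * (-1)^k) * fact k * FF N k t"
      using Q that by (simp add: mult.assoc)
    thus ?thesis by (simp add: sgn)
  qed
  have FFp: "FF N k t > 0" if "t \<in> U" for k t using FF_pos[of t N k] that inU assms by auto
  have stm: "strictly_totally_monotone U \<Theta>"
    unfolding strictly_totally_monotone_def
  proof (intro conjI allI ballI)
    show "continuous_on U \<Theta>"
    proof (rule continuous_at_imp_continuous_on, rule ballI)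
      fix t assume "t \<in> U"
      from Dk[OF this, of 0] show "isCont \<Theta> t" by (intro DERIV_isCont) simp
    qed
    fix k t assume t: "t \<in> interior U"
    hence t': "t \<in> U" using oU by (simp add: interior_open)
    show "(deriv ^^ k) \<Theta> field_differentiable at t"
      using Dk[OF t'] by (auto simp: field_differentiable_def)
    show "(-1)^k * (deriv ^^ k) \<Theta> t > 0"
      using pos[OF t'] FFp[OF t'] by simp
  qed
  show ?thesis
  proof (intro conjI allI impI)
    show "strictly_totally_monotone {- ln (real N)<..} (\<lambda>t. theta t N)"
      using stm by (simp add: U_def \<Theta>_def)
    fix k :: nat and t :: real assume "t > - ln (real N)"
    hence t: "t \<in> U" by (simp add: U_def)
    show "convergent (\<lambda>n::nat. integral {real N..real n} (\<lambda>x. 1 / (t + ln x) ^ (k + 1))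
          - (\<Sum>j=N..<n. 1 / (harm j - euler_mascheroni + t) ^ (k + 1)))"
      using seq_lim[of t N k] t inU assms by (auto simp: convergent_def)
    show "(-1) ^ k * (deriv ^^ k) (\<lambda>t. theta t N) t =
         fact k * lim (\<lambda>n::nat. integral {real N..real n} (\<lambda>x. 1 / (t + ln x) ^ (k + 1))
          - (\<Sum>j=N..<n. 1 / (harm j - euler_mascheroni + t) ^ (k + 1)))"
      using pos[OF t, of k] lims[OF t, of k] by (simp add: \<Theta>_def)
    show "fact k * lim (\<lambda>n::nat. integral {real N..real n} (\<lambda>x. 1 / (t + ln x) ^ (k + 1))
          - (\<Sum>j=N..<n. 1 / (harm j - euler_mascheroni + t) ^ (k + 1))) > 0"
      using lims[OF t, of k] FFp[OF t, of k] by simp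
  qed
qed


end
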